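(* Let $A=[a_1,\dots,a_N]\in\mathbb{C}^{n\times N}$ be a random matrix with i.i.d. entries distributed as $N(0,1)+iN(0,1)$, let $x_0\in\mathbb{C}^n$ with $\|x_0\|=1$, and $b(j)=|a_j^*x_0|$. Let $I\subset\{1,\dots,N\}$ be such that $b(i)\le b(j)$ for all $i\in I$, $j\notin I$, with $|I|<N$. Define $\tau_*=-2\ln(1-|I|/N)$, $\hat I=\{i: b(i)^2\le\tau_*\}$, and let $\tau_1\le\tau_2\le\dots\le\tau_N$ be the values $b(1)^2,\dots,b(N)^2$ sorted in increasing order. Then: (i) For any $\delta>0$, $\tau_{|I|}\le\tau_*+\delta$ with probability at least \[ 1-\exp\left(-\frac N2\delta^2e^{-\delta}\left|1-|I|/N\right|^2\right). \] (ii) For each $\epsilon>0$, $|\hat I|\ge|I|(1-\epsilon)$, or equivalently $\tau_{\lfloor|I|(1-\epsilon)\rfloor}\le\tau_*$, with probability at least \[ 1-2\exp\left(-4\epsilon^2\left|1-|I|/N\right|^2|I|^2/N\right). \]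
   Context: $A^*$ denotes conjugate transpose. Under these assumptions each $b(i)^2$ has the distribution function $F(\tau)=1-\exp(-\tau/2)$, so that $F(\tau_* )=|I|/N$. *)

theory Defs
  imports "HOL-Probability.Probability"
begin

text \<open>Columns a_j of A are indexed by j < N (0-based), rows by k < n.
  b(j) = |a_j^* x0| = cmod (sum_k conj(A k j) * x0 k).\<close>
definition bval :: "nat \<Rightarrow> (nat \<Rightarrow> nat \<Rightarrow> 'a \<Rightarrow> complex) \<Rightarrow> (nat \<Rightarrow> complex) \<Rightarrow> nat \<Rightarrow> 'a \<Rightarrow> real" where
  "bval n A x0 j \<omega> = cmod (\<Sum>k<n. cnj (A k j \<omega>) * x0 k)"

text \<open>Order statistic, 1-indexed: ord_stat xs k is the k-th smallest entry of xs (k \<ge> 1).\<close>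
definition ord_stat :: "real list \<Rightarrow> nat \<Rightarrow> real" where
  "ord_stat xs k = sort xs ! (k - 1)"

definition tau :: "nat \<Rightarrow> nat \<Rightarrow> (nat \<Rightarrow> nat \<Rightarrow> 'a \<Rightarrow> complex) \<Rightarrow> (nat \<Rightarrow> complex) \<Rightarrow> nat \<Rightarrow> 'a \<Rightarrow> real" where
  "tau n N A x0 k \<omega> = ord_stat (map (\<lambda>j. (bval n A x0 j \<omega>)\<^sup>2) [0..<N]) k"

definition tau_star :: "nat \<Rightarrow> nat \<Rightarrow> real" where
  "tau_star m N = - 2 * ln (1 - real m / real N)"

definition Ihat :: "nat \<Rightarrow> nat \<Rightarrow> nat \<Rightarrow> (nat \<Rightarrow> nat \<Rightarrow> 'a \<Rightarrow> complex) \<Rightarrow> (nat \<Rightarrow> complex) \<Rightarrow> 'a \<Rightarrow> nat set" where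
  "Ihat n N m A x0 \<omega> = {i \<in> {..<N}. (bval n A x0 i \<omega>)\<^sup>2 \<le> tau_star m N}"

end

theory Submission
  imports Defs
begin

lemma mgf_bound_aux:
  fixes p V :: real
  assumes p: "0 \<le> p" "p \<le> 1" and V: "\<And>r. 0 \<le> r \<Longrightarrow> r \<le> p \<Longrightarrow> r * (1 - r) \<le> V"
    and l: "0 \<le> l"
  shows "ln (1 - p + p * exp (-l)) \<le> - p * l + V * l\<^sup>2 / 2"
proof -
  define r where "r = (\<lambda>x::real. p * exp (-x) / (1 - p + p * exp (-x)))"
  have pos: "1 - p + p * exp (-x) > 0" for x
  proof (cases "p = 1")
    case True then show ?thesis by simp
  next
    case False then have "1 - p > 0" using p by simp
    then show ?thesis using p by (simp add: add_pos_nonneg)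
  qed
  have r_range: "0 \<le> r x \<and> r x \<le> p" if "0 \<le> x" for x
  proof -
    have e: "exp (-x) \<le> 1" using that by simp
    have "p * exp (-x) \<le> p * (1 - p + p * exp (-x))"
    proof -
      have "p * exp (-x) * 1 \<le> p * exp (-x) * 1 + p * (1-p) * (1 - exp (-x))"
        using p e by (intro add_increasing2) (auto intro!: mult_nonneg_nonneg)
      then show ?thesis by (simp add: algebra_simps)
    qed
    then show ?thesis using pos[of x] p unfolding r_def
      by (auto simp: divide_le_eq intro!: divide_nonneg_pos)
  qed
  define g' where "g' = (\<lambda>x. - p + V * x + r x)"
  define g where "g = (\<lambda>x. - p * x + V * x\<^sup>2 / 2 - ln (1 - p + p * exp (-x)))"
  have dr: "(r has_real_derivative (- r x * (1 - r x))) (at x)" for x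
  proof -
    have "(r has_real_derivative
        ((p * (- exp (-x))) * (1 - p + p * exp (-x)) - p * exp (-x) * (p * (- exp (-x)))) / (1 - p + p * exp (-x))\<^sup>2) (at x)"
      unfolding r_def using pos[of x]
      by (auto intro!: derivative_eq_intros simp: power2_eq_square)
    moreover have "((p * (- exp (-x))) * (1 - p + p * exp (-x)) - p * exp (-x) * (p * (- exp (-x)))) / (1 - p + p * exp (-x))\<^sup>2
        = - r x * (1 - r x)"
      unfolding r_def using pos[of x] by (simp add: divide_simps power2_eq_square) (simp add: algebra_simps)
    ultimately show ?thesis by simp
  qed
  have dg': "(g' has_real_derivative (V - r x * (1 - r x))) (at x)" for x
    unfolding g'_def by (auto intro!: derivative_eq_intros dr)
  have dg: "(g has_real_derivative g' x) (at x)" for x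
  proof -
    have "(g has_real_derivative (- p + V * x - (p * (- exp (-x))) / (1 - p + p * exp (-x)))) (at x)"
      unfolding g_def using pos[of x] by (auto intro!: derivative_eq_intros)
    moreover have "- p + V * x - (p * (- exp (-x))) / (1 - p + p * exp (-x)) = g' x"
      unfolding g'_def r_def by simp
    ultimately show ?thesis by simp
  qed
  have g'0: "g' 0 = 0" unfolding g'_def r_def by simp
  have g'nn: "g' x \<ge> 0" if "0 \<le> x" for x
  proof -
    have "g' 0 \<le> g' x"
      by (rule DERIV_nonneg_imp_nondecreasing[OF that]) (use dg' V r_range in force)
    then show ?thesis using g'0 by simp
  qed
  have "g 0 \<le> g l"
    by (rule DERIV_nonneg_imp_nondecreasing[OF l]) (use dg g'nn in force)
  moreover have "g 0 = 0" unfolding g_def by simp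
  ultimately show ?thesis unfolding g_def by simp
qed

lemma (in prob_space) nn_integral_exp_bernoulli:
  assumes X: "random_variable borel X" and X01: "\<And>\<omega>. \<omega> \<in> space M \<Longrightarrow> X \<omega> \<in> {0,1}"
  shows "(\<integral>\<^sup>+\<omega>. ennreal (exp (- l * X \<omega>)) \<partial>M)
           = ennreal (1 - (1 - exp (-l)) * prob {\<omega>\<in>space M. X \<omega> = 1})"
proof -
  define E where "E = {\<omega>\<in>space M. X \<omega> = 1}"
  have E: "E \<in> events" unfolding E_def using X by measurable
  have "(\<integral>\<^sup>+\<omega>. ennreal (exp (- l * X \<omega>)) \<partial>M)
      = (\<integral>\<^sup>+\<omega>. ennreal (exp (-l)) * indicator E \<omega> + indicator (space M - E) \<omega> \<partial>M)"
    by (intro nn_integral_cong) (use X01 in \<open>auto simp: E_def indicator_def\<close>)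
  also have "\<dots> = ennreal (exp (-l)) * emeasure M E + emeasure M (space M - E)"
    using E by (subst nn_integral_add) (auto simp: nn_integral_cmult)
  also have "\<dots> = ennreal (exp (-l) * prob E + (1 - prob E))"
    using E by (simp add: emeasure_eq_measure prob_compl ennreal_mult[symmetric] ennreal_plus[symmetric] del: ennreal_plus)
  also have "exp (-l) * prob E + (1 - prob E) = 1 - (1 - exp (-l)) * prob E"
    by (simp add: algebra_simps)
  finally show ?thesis unfolding E_def .
qed

lemma (in prob_space) chernoff_count_le:
  assumes fin: "finite J" and indep: "indep_vars (\<lambda>_. borel) X J"
    and X01: "\<And>j \<omega>. j \<in> J \<Longrightarrow> \<omega> \<in> space M \<Longrightarrow> X j \<omega> \<in> {0,1}"
    and pj: "\<And>j. j \<in> J \<Longrightarrow> prob {\<omega>\<in>space M. X j \<omega> = 1} \<ge> p"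
    and p: "0 \<le> p" "p \<le> 1" and l: "l > 0"
  shows "prob {\<omega>\<in>space M. (\<Sum>j\<in>J. X j \<omega>) \<le> a}
           \<le> exp (l * a) * (1 - p * (1 - exp (-l))) ^ card J"
proof -
  have rv: "random_variable borel (X j)" if "j \<in> J" for j
    using indep that unfolding indep_vars_def by blast
  have c: "0 \<le> 1 - exp (-l)" using l by simp
  have nn: "0 \<le> 1 - p * (1 - exp (-l))"
    using p c mult_mono[of p 1 "1 - exp (-l)" 1] by simp
  have ch: "emeasure M {\<omega>\<in>space M. (\<Sum>j\<in>J. X j \<omega>) \<le> a}
      \<le> ennreal (exp (l * a)) * (\<integral>\<^sup>+\<omega>. ennreal (exp (- l * (\<Sum>j\<in>J. X j \<omega>))) * indicator (space M) \<omega> \<partial>M)"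
    by (rule Chernoff_ineq_nn_integral_le[OF l]) (auto intro!: borel_measurable_sum rv)
  have "(\<integral>\<^sup>+\<omega>. ennreal (exp (- l * (\<Sum>j\<in>J. X j \<omega>))) * indicator (space M) \<omega> \<partial>M)
      = (\<integral>\<^sup>+\<omega>. (\<Prod>j\<in>J. ennreal (exp (- l * X j \<omega>))) \<partial>M)"
    by (intro nn_integral_cong)
       (simp add: sum_distrib_left exp_sum fin prod_ennreal indicator_def)
  also have "\<dots> = (\<Prod>j\<in>J. \<integral>\<^sup>+\<omega>. ennreal (exp (- l * X j \<omega>)) \<partial>M)"
    by (intro indep_vars_nn_integral fin indep_vars_compose2[OF indep]) auto
  also have "\<dots> = (\<Prod>j\<in>J. ennreal (1 - (1 - exp (-l)) * prob {\<omega>\<in>space M. X j \<omega> = 1}))"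
    by (intro prod.cong refl nn_integral_exp_bernoulli rv X01)
  also have "\<dots> \<le> (\<Prod>j\<in>J. ennreal (1 - p * (1 - exp (-l))))"
  proof (intro prod_mono_ennreal ennreal_leI)
    fix j assume "j \<in> J"
    then show "1 - (1 - exp (-l)) * prob {\<omega>\<in>space M. X j \<omega> = 1} \<le> 1 - p * (1 - exp (-l))"
      using mult_right_mono[OF pj[of j] c] by (simp add: mult.commute)
  qed
  also have "\<dots> = ennreal ((1 - p * (1 - exp (-l))) ^ card J)"
    using nn by (simp add: ennreal_power)
  finally have "emeasure M {\<omega>\<in>space M. (\<Sum>j\<in>J. X j \<omega>) \<le> a}
      \<le> ennreal (exp (l * a)) * ennreal ((1 - p * (1 - exp (-l))) ^ card J)"
    using ch by (meson mult_left_mono order_trans zero_le)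
  also have "\<dots> = ennreal (exp (l * a) * (1 - p * (1 - exp (-l))) ^ card J)"
    using nn by (simp add: ennreal_mult)
  finally show ?thesis
    by (simp add: emeasure_eq_measure ennreal_le_iff2 ennreal_le_iff) (use measure_nonneg[of M] nn in \<open>smt (verit) exp_gt_zero zero_le_power mult_nonneg_nonneg\<close>)
qed

lemma nn_integral_even:
  fixes f :: "real \<Rightarrow> ennreal"
  assumes [measurable]: "f \<in> borel_measurable borel" and ev: "\<And>x. f (-x) = f x"
  shows "(\<integral>\<^sup>+x. f x \<partial>lborel) = 2 * (\<integral>\<^sup>+x. f x * indicator {0<..} x \<partial>lborel)"
proof -
  have "(\<integral>\<^sup>+x. f x \<partial>lborel) = (\<integral>\<^sup>+x. f x * indicator {0<..} x + f x * indicator {..<0} x \<partial>lborel)"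
    by (intro nn_integral_cong_AE eventually_mono[OF AE_lborel_singleton[of 0]])
       (auto simp: indicator_def)
  also have "\<dots> = (\<integral>\<^sup>+x. f x * indicator {0<..} x \<partial>lborel) + (\<integral>\<^sup>+x. f x * indicator {..<0} x \<partial>lborel)"
    by (rule nn_integral_add) auto
  also have "(\<integral>\<^sup>+x. f x * indicator {..<0} x \<partial>lborel) = (\<integral>\<^sup>+x. f (0 + (-1) * x) * indicator {..<0} (0 + (-1) * x) \<partial>lborel)"
    by (subst nn_integral_real_affine[where c="-1" and t=0]) auto
  also have "\<dots> = (\<integral>\<^sup>+x. f x * indicator {0<..} x \<partial>lborel)"
    by (intro nn_integral_cong) (auto simp: ev indicator_def)
  finally show ?thesis
    by (simp add: mult_2)
qed

definition gau2 :: "real \<Rightarrow> real \<Rightarrow> real \<Rightarrow> real" where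
  "gau2 t u v = exp (- (u\<^sup>2 + v\<^sup>2) / 2) / (2 * pi) * (if u\<^sup>2 + v\<^sup>2 \<le> t then 1 else 0)"

lemma gau2_measurable[measurable]: "(\<lambda>(u,v). gau2 t u v) \<in> borel_measurable (borel \<Otimes>\<^sub>M borel)"
  unfolding gau2_def by measurable

lemma gau2_nonneg: "0 \<le> gau2 t u v"
  unfolding gau2_def by simp

lemma inner_integral:
  assumes t: "0 \<le> t" and s: "0 \<le> s"
  shows "(\<integral>\<^sup>+u. ennreal (u * exp (- (u\<^sup>2 * (1 + s\<^sup>2)) / 2) / (2 * pi) * (if u\<^sup>2 * (1 + s\<^sup>2) \<le> t then 1 else 0)) * indicator {0<..} u \<partial>lborel)
        = ennreal ((1 - exp (- t / 2)) / (2 * pi * (1 + s\<^sup>2)))"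
proof -
  define a where "a = 1 + s\<^sup>2"
  have a: "a > 0" unfolding a_def by (simp add: add_pos_nonneg)
  define b where "b = sqrt (t / a)"
  have b: "0 \<le> b" unfolding b_def using a t by simp
  have bb: "b\<^sup>2 * a = t" unfolding b_def using a t by simp
  have le_iff: "u\<^sup>2 * a \<le> t \<longleftrightarrow> u \<le> b" if "0 \<le> u" for u
  proof -
    have "u\<^sup>2 * a \<le> t \<longleftrightarrow> u\<^sup>2 \<le> b\<^sup>2" using a bb by (simp add: mult_le_cancel_right flip: bb)
    also have "\<dots> \<longleftrightarrow> u \<le> b" using that b by (simp add: power2_le_iff_abs_le)
    finally show ?thesis .
  qed
  define f where "f = (\<lambda>u. u * exp (- (u\<^sup>2 * a) / 2) / (2 * pi))"
  define F where "F = (\<lambda>u. - exp (- (u\<^sup>2 * a) / 2) / (2 * pi * a))"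
  have "(\<integral>\<^sup>+u. ennreal (u * exp (- (u\<^sup>2 * (1 + s\<^sup>2)) / 2) / (2 * pi) * (if u\<^sup>2 * (1 + s\<^sup>2) \<le> t then 1 else 0)) * indicator {0<..} u \<partial>lborel)
      = (\<integral>\<^sup>+u. ennreal (f u) * indicator {0..b} u \<partial>lborel)"
    by (intro nn_integral_cong) (auto simp: f_def indicator_def le_iff a_def[symmetric] less_le)
  also have "\<dots> = F b - F 0"
  proof (rule nn_integral_FTC_Icc)
    show "f \<in> borel_measurable borel" unfolding f_def by measurable
    fix x assume "x \<in> {0..b}"
    then show "(F has_real_derivative f x) (at x)" "0 \<le> f x"
      unfolding F_def f_def using a
      by (auto intro!: derivative_eq_intros simp: field_simps)
  qed (use b in auto)
  also have "F b - F 0 = (1 - exp (- t / 2)) / (2 * pi * (1 + s\<^sup>2))"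
    unfolding F_def using a bb by (simp add: a_def[symmetric] field_simps)
  finally show ?thesis .
qed

lemma arctan_half_integral:
  "(\<integral>\<^sup>+s. ennreal (1 / (1 + s\<^sup>2)) * indicator {0<..} s \<partial>lborel) = ennreal (pi / 2)"
proof -
  have "(\<integral>\<^sup>+s. ennreal (1 / (1 + s\<^sup>2)) * indicator {0<..} s \<partial>lborel)
      = (\<integral>\<^sup>+s. ennreal (1 / (1 + s\<^sup>2)) * indicator {0..} s \<partial>lborel)"
    by (intro nn_integral_cong_AE eventually_mono[OF AE_lborel_singleton[of 0]])
       (auto simp: indicator_def)
  also have "\<dots> = ennreal (pi / 2 - arctan 0)"
  proof (rule nn_integral_FTC_atLeast)
    show "(arctan \<longlongrightarrow> pi / 2) at_top"
      by (rule tendsto_arctan_at_top)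
  qed (auto intro!: derivative_eq_intros simp: add_nonneg_eq_0_iff field_simps power2_eq_square)
  finally show ?thesis by simp
qed

lemma polar_integral:
  assumes t: "0 \<le> t"
  shows "(\<integral>\<^sup>+u. \<integral>\<^sup>+v. ennreal (gau2 t u v) \<partial>lborel \<partial>lborel) = ennreal (1 - exp (- t / 2))"
proof -
  define J where "J = (\<lambda>u. \<integral>\<^sup>+v. ennreal (gau2 t u v) * indicator {0<..} v \<partial>lborel)"
  have Jm [measurable]: "J \<in> borel_measurable borel"
    unfolding J_def by measurable
  have ev1: "(\<integral>\<^sup>+v. ennreal (gau2 t u v) \<partial>lborel) = 2 * J u" for u
    unfolding J_def by (rule nn_integral_even) (auto simp: gau2_def)
  have Jev: "J (-u) = J u" for u
    unfolding J_def by (simp add: gau2_def)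
  define K where "K = (\<lambda>u s. u * exp (- (u\<^sup>2 * (1 + s\<^sup>2)) / 2) / (2 * pi) * (if u\<^sup>2 * (1 + s\<^sup>2) \<le> t then 1 else 0))"
  have Km [measurable]: "(\<lambda>(u,s). K u s) \<in> borel_measurable (borel \<Otimes>\<^sub>M borel)"
    unfolding K_def by measurable
  have JK: "J u * indicator {0<..} u = (\<integral>\<^sup>+s. ennreal (K u s) * indicator {0<..} u * indicator {0<..} s \<partial>lborel)" for u
  proof (cases "u > 0")
    case True
    have "J u = ennreal \<bar>u\<bar> * (\<integral>\<^sup>+s. ennreal (gau2 t u (0 + u * s)) * indicator {0<..} (0 + u * s) \<partial>lborel)"
      unfolding J_def by (rule nn_integral_real_affine) (use True in auto)
    also have "\<dots> = (\<integral>\<^sup>+s. ennreal (K u s) * indicator {0<..} s \<partial>lborel)"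
      using True
      by (subst nn_integral_cmult[symmetric])
         (auto intro!: nn_integral_cong simp: K_def gau2_def indicator_def zero_less_mult_iff
               ennreal_mult[symmetric] power_mult_distrib algebra_simps)
    finally show ?thesis using True by simp
  qed (simp add: indicator_def)
  have "(\<integral>\<^sup>+u. \<integral>\<^sup>+v. ennreal (gau2 t u v) \<partial>lborel \<partial>lborel) = (\<integral>\<^sup>+u. 2 * J u \<partial>lborel)"
    by (simp add: ev1)
  also have "\<dots> = 2 * (\<integral>\<^sup>+u. J u \<partial>lborel)"
    by (rule nn_integral_cmult) auto
  also have "(\<integral>\<^sup>+u. J u \<partial>lborel) = 2 * (\<integral>\<^sup>+u. J u * indicator {0<..} u \<partial>lborel)"
    by (rule nn_integral_even) (auto simp: Jev)
  also have "(\<integral>\<^sup>+u. J u * indicator {0<..} u \<partial>lborel)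
      = (\<integral>\<^sup>+u. \<integral>\<^sup>+s. ennreal (K u s) * indicator {0<..} u * indicator {0<..} s \<partial>lborel \<partial>lborel)"
    by (simp add: JK)
  also have "\<dots> = (\<integral>\<^sup>+s. \<integral>\<^sup>+u. ennreal (K u s) * indicator {0<..} u * indicator {0<..} s \<partial>lborel \<partial>lborel)"
    by (rule lborel_pair.Fubini'[symmetric]) measurable
  also have "\<dots> = (\<integral>\<^sup>+s. ennreal ((1 - exp (- t / 2)) / (2 * pi)) * (ennreal (1 / (1 + s\<^sup>2)) * indicator {0<..} s) \<partial>lborel)"
  proof (intro nn_integral_cong)
    fix s :: real
    show "(\<integral>\<^sup>+u. ennreal (K u s) * indicator {0<..} u * indicator {0<..} s \<partial>lborel)
        = ennreal ((1 - exp (- t / 2)) / (2 * pi)) * (ennreal (1 / (1 + s\<^sup>2)) * indicator {0<..} s)"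
    proof (cases "s > 0")
      case True
      have "(\<integral>\<^sup>+u. ennreal (K u s) * indicator {0<..} u * indicator {0<..} s \<partial>lborel)
          = (\<integral>\<^sup>+u. ennreal (K u s) * indicator {0<..} u \<partial>lborel)"
        using True by simp
      also have "\<dots> = ennreal ((1 - exp (- t / 2)) / (2 * pi * (1 + s\<^sup>2)))"
        unfolding K_def by (rule inner_integral) (use t True in auto)
      also have "\<dots> = ennreal ((1 - exp (- t / 2)) / (2 * pi)) * ennreal (1 / (1 + s\<^sup>2))"
        using t by (subst ennreal_mult[symmetric]) (auto simp: add_pos_nonneg)
      finally show ?thesis using True by simp
    qed simp
  qed
  also have "\<dots> = ennreal ((1 - exp (- t / 2)) / (2 * pi)) * ennreal (pi / 2)"
    by (subst nn_integral_cmult) (auto simp: arctan_half_integral)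
  finally have "(\<integral>\<^sup>+u. \<integral>\<^sup>+v. ennreal (gau2 t u v) \<partial>lborel \<partial>lborel)
      = 2 * (2 * (ennreal ((1 - exp (- t / 2)) / (2 * pi)) * ennreal (pi / 2)))" .
  also have "\<dots> = ennreal (2 * (2 * ((1 - exp (- t / 2)) / (2 * pi) * (pi / 2))))"
  proof -
    have e: "0 \<le> 1 - exp (- t / 2)" using t by simp
    have "ennreal ((1 - exp (- t / 2)) / (2 * pi)) * ennreal (pi / 2) = ennreal ((1 - exp (- t / 2)) / (2 * pi) * (pi / 2))"
      using e by (intro ennreal_mult[symmetric]) auto
    moreover have "(2::ennreal) * (2 * ennreal x) = ennreal (2 * (2 * x))" if "0 \<le> x" for x
      using that by (simp add: ennreal_mult)
    ultimately show ?thesis using e by simp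
  qed
  also have "2 * (2 * ((1 - exp (- t / 2)) / (2 * pi) * (pi / 2))) = 1 - exp (- t / 2)"
    by simp
  finally show ?thesis .
qed

lemma (in prob_space) indep_var_borel_lborel:
  "indep_var borel U borel V \<Longrightarrow> indep_var lborel U lborel (V :: 'a \<Rightarrow> real)"
  unfolding indep_var_def indep_vars_def by (simp add: case_bool_if if_distrib cong: if_cong)

lemma (in prob_space) prob_sumsq_le:
  fixes U V :: "'a \<Rightarrow> real"
  assumes ind: "indep_var borel U borel V"
    and U: "distributed M lborel U std_normal_density"
    and V: "distributed M lborel V std_normal_density"
    and t: "0 \<le> t"
  shows "prob {\<omega>\<in>space M. (U \<omega>)\<^sup>2 + (V \<omega>)\<^sup>2 \<le> t} = 1 - exp (- t / 2)"
proof -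
  have J: "distributed M (lborel \<Otimes>\<^sub>M lborel) (\<lambda>x. (U x, V x)) (\<lambda>(x, y). ennreal (std_normal_density x) * ennreal (std_normal_density y))"
    by (rule distributed_joint_indep[OF _ _ U V indep_var_borel_lborel[OF ind]]) (auto intro: lborel.sigma_finite_measure_axioms)
  define S where "S = {z :: real \<times> real. (fst z)\<^sup>2 + (snd z)\<^sup>2 \<le> t}"
  have "{z \<in> space (borel \<Otimes>\<^sub>M borel). (fst z)\<^sup>2 + (snd z :: real)\<^sup>2 \<le> t} \<in> sets (borel \<Otimes>\<^sub>M (borel :: real measure))"
    by measurable
  then have Sm: "S \<in> sets (lborel \<Otimes>\<^sub>M lborel)" unfolding S_def by (simp add: space_pair_measure)
  have rv: "(\<lambda>x. (U x, V x)) \<in> measurable M (lborel \<Otimes>\<^sub>M lborel)"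
    using J by (rule distributed_measurable)
  have "emeasure M {\<omega>\<in>space M. (U \<omega>)\<^sup>2 + (V \<omega>)\<^sup>2 \<le> t} = emeasure (distr M (lborel \<Otimes>\<^sub>M lborel) (\<lambda>x. (U x, V x))) S"
    using Sm rv by (subst emeasure_distr) (auto simp: S_def intro!: arg_cong[where f="emeasure M"])
  also have "\<dots> = emeasure (density (lborel \<Otimes>\<^sub>M lborel) (\<lambda>(x, y). ennreal (std_normal_density x) * ennreal (std_normal_density y))) S"
    using J by (simp add: distributed_def)
  also have "\<dots> = (\<integral>\<^sup>+z. (case z of (x, y) \<Rightarrow> ennreal (std_normal_density x) * ennreal (std_normal_density y)) * indicator S z \<partial>(lborel \<Otimes>\<^sub>M lborel))"
    using Sm by (subst emeasure_density) auto
  also have "\<dots> = (\<integral>\<^sup>+u. \<integral>\<^sup>+v. (ennreal (std_normal_density u) * ennreal (std_normal_density v)) * indicator S (u, v) \<partial>lborel \<partial>lborel)"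
  proof -
    have mf: "(\<lambda>z. (case z of (x, y) \<Rightarrow> ennreal (std_normal_density x) * ennreal (std_normal_density y)) * indicator S z) \<in> borel_measurable (lborel \<Otimes>\<^sub>M lborel)"
      using Sm by measurable
    show ?thesis using lborel.nn_integral_fst[OF mf] by simp
  qed
  also have "\<dots> = (\<integral>\<^sup>+u. \<integral>\<^sup>+v. ennreal (gau2 t u v) \<partial>lborel \<partial>lborel)"
  proof (intro nn_integral_cong)
    fix u v :: real
    have sq: "sqrt (2 * pi) * sqrt (2 * pi) = 2 * pi" by simp
    have "std_normal_density u * std_normal_density v = exp (- (u\<^sup>2 + v\<^sup>2) / 2) / (2 * pi)"
      unfolding std_normal_density_def
      by (simp add: sq exp_add[symmetric] add_divide_distrib)
    then show "ennreal (std_normal_density u) * ennreal (std_normal_density v) * indicator S (u, v) = ennreal (gau2 t u v)"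
      by (simp add: S_def gau2_def indicator_def ennreal_mult[symmetric])
  qed
  also have "\<dots> = ennreal (1 - exp (- t / 2))"
    by (rule polar_integral[OF t])
  finally show ?thesis
    using t by (simp add: emeasure_eq_measure)
qed

lemma lborel_translate:
  assumes B: "B \<in> sets borel"
  shows "emeasure lborel ((\<lambda>x::real. c + x) -` B) = emeasure lborel B"
proof -
  have "emeasure lborel B = emeasure (distr lborel borel ((+) c)) B"
    by (simp add: lborel_distr_plus)
  also have "\<dots> = emeasure lborel (((+) c) -` B \<inter> space lborel)"
    using B by (subst emeasure_distr) auto
  finally show ?thesis by simp
qed

lemma shear1:
  "distr (lborel \<Otimes>\<^sub>M lborel) (lborel \<Otimes>\<^sub>M lborel) (\<lambda>(x,y). (x + a * y, y :: real)) = lborel \<Otimes>\<^sub>M lborel"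
  (is "distr ?L ?L ?T = ?L")
proof (rule measure_eqI)
  fix A assume "A \<in> sets (distr ?L ?L ?T)"
  then have A: "A \<in> sets ?L" by simp
  have Tm: "?T \<in> measurable ?L ?L" by measurable
  have A': "?T -` A \<inter> space ?L \<in> sets ?L" using Tm A by measurable
  have "emeasure (distr ?L ?L ?T) A = emeasure ?L (?T -` A \<inter> space ?L)"
    by (rule emeasure_distr[OF Tm A])
  also have "\<dots> = (\<integral>\<^sup>+y. emeasure lborel ((\<lambda>x. (x, y)) -` (?T -` A \<inter> space ?L)) \<partial>lborel)"
    by (rule lborel_pair.emeasure_pair_measure_alt2[OF A'])
  also have "\<dots> = (\<integral>\<^sup>+y. emeasure lborel ((\<lambda>x. (x, y)) -` A) \<partial>lborel)"
  proof (intro nn_integral_cong)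
    fix y :: real
    have "(\<lambda>x. (x, y)) -` (?T -` A \<inter> space ?L) = (\<lambda>x. a * y + x) -` ((\<lambda>x. (x, y)) -` A)"
      by (auto simp: space_pair_measure algebra_simps)
    then show "emeasure lborel ((\<lambda>x. (x, y)) -` (?T -` A \<inter> space ?L)) = emeasure lborel ((\<lambda>x. (x, y)) -` A)"
      using sets_Pair2[OF A] by (simp add: lborel_translate)
  qed
  also have "\<dots> = emeasure ?L A"
    by (rule lborel_pair.emeasure_pair_measure_alt2[OF A, symmetric])
  finally show "emeasure (distr ?L ?L ?T) A = emeasure ?L A" .
qed simp

lemma shear2:
  "distr (lborel \<Otimes>\<^sub>M lborel) (lborel \<Otimes>\<^sub>M lborel) (\<lambda>(x,y). (x, y + b * x :: real)) = lborel \<Otimes>\<^sub>M lborel"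
  (is "distr ?L ?L ?T = ?L")
proof (rule measure_eqI)
  fix A assume "A \<in> sets (distr ?L ?L ?T)"
  then have A: "A \<in> sets ?L" by simp
  have Tm: "?T \<in> measurable ?L ?L" by measurable
  have A': "?T -` A \<inter> space ?L \<in> sets ?L" using Tm A by measurable
  have "emeasure (distr ?L ?L ?T) A = emeasure ?L (?T -` A \<inter> space ?L)"
    by (rule emeasure_distr[OF Tm A])
  also have "\<dots> = (\<integral>\<^sup>+x. emeasure lborel (Pair x -` (?T -` A \<inter> space ?L)) \<partial>lborel)"
    by (rule lborel.emeasure_pair_measure_alt[OF A'])
  also have "\<dots> = (\<integral>\<^sup>+x. emeasure lborel (Pair x -` A) \<partial>lborel)"
  proof (intro nn_integral_cong)
    fix x :: real
    have "Pair x -` (?T -` A \<inter> space ?L) = (\<lambda>y. b * x + y) -` (Pair x -` A)"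
      by (auto simp: space_pair_measure algebra_simps)
    then show "emeasure lborel (Pair x -` (?T -` A \<inter> space ?L)) = emeasure lborel (Pair x -` A)"
      using sets_Pair1[OF A] by (simp add: lborel_translate)
  qed
  also have "\<dots> = emeasure ?L A"
    by (rule lborel.emeasure_pair_measure_alt[OF A, symmetric])
  finally show "emeasure (distr ?L ?L ?T) A = emeasure ?L A" .
qed simp

definition rot :: "real \<Rightarrow> real \<Rightarrow> real \<times> real \<Rightarrow> real \<times> real" where
  "rot c d = (\<lambda>(x,y). (c * x - d * y, d * x + c * y))"

lemma rot_measurable[measurable]: "rot c d \<in> measurable (lborel \<Otimes>\<^sub>M lborel) (lborel \<Otimes>\<^sub>M lborel)"
  unfolding rot_def by measurable

lemma rot_nz:
  assumes cd: "c\<^sup>2 + d\<^sup>2 = 1" and d: "d \<noteq> 0"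
  shows "distr (lborel \<Otimes>\<^sub>M lborel) (lborel \<Otimes>\<^sub>M lborel) (rot c d) = lborel \<Otimes>\<^sub>M lborel"
proof -
  let ?L = "lborel \<Otimes>\<^sub>M lborel :: (real \<times> real) measure"
  define a where "a = (c - 1) / d"
  let ?S1 = "\<lambda>(x,y). (x + a * y, y :: real)"
  let ?S2 = "\<lambda>(x,y). (x, y + d * x :: real)"
  have S1m: "?S1 \<in> measurable ?L ?L" by measurable
  have S2m: "?S2 \<in> measurable ?L ?L" by measurable
  have eq: "rot c d = ?S1 \<circ> ?S2 \<circ> ?S1"
  proof
    fix z :: "real \<times> real"
    obtain x y where z: "z = (x, y)" by (cases z)
    have "c = 1 + a * d" using d unfolding a_def by simp
    moreover have "- d = a * (1 + c)"
    proof -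
      have "a * (1 + c) = (c\<^sup>2 - 1) / d" using d unfolding a_def by (simp add: field_simps power2_eq_square)
      also have "\<dots> = - d" using cd d by (simp add: field_simps power2_eq_square)
      finally show ?thesis by simp
    qed
    ultimately have h1: "c = 1 + a * d" and h2: "d + a * (a * d) + 2 * a = 0" by (simp_all add: algebra_simps)
    have e: "y * (d + a * (a * d) + 2 * a) = 0" using h2 by simp
    show "rot c d z = (?S1 \<circ> ?S2 \<circ> ?S1) z"
      unfolding z rot_def using e by (simp add: h1 algebra_simps)
  qed
  have d1: "distr (distr ?L ?L ?S1) ?L ?S2 = distr ?L ?L (?S2 \<circ> ?S1)"
    by (rule distr_distr[OF S2m S1m])
  have d2: "distr (distr ?L ?L (?S2 \<circ> ?S1)) ?L ?S1 = distr ?L ?L (?S1 \<circ> (?S2 \<circ> ?S1))"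
    by (rule distr_distr[OF S1m measurable_comp[OF S1m S2m]])
  have "?L = distr (distr (distr ?L ?L ?S1) ?L ?S2) ?L ?S1"
    by (simp only: shear1 shear2)
  also have "\<dots> = distr ?L ?L (?S1 \<circ> (?S2 \<circ> ?S1))" by (simp only: d1 d2)
  also have "?S1 \<circ> (?S2 \<circ> ?S1) = rot c d" by (simp only: eq o_assoc)
  finally show ?thesis by simp
qed

lemma rot_lborel2:
  assumes cd: "c\<^sup>2 + d\<^sup>2 = 1"
  shows "distr (lborel \<Otimes>\<^sub>M lborel) (lborel \<Otimes>\<^sub>M lborel) (rot c d) = lborel \<Otimes>\<^sub>M lborel"
proof (cases "d = 0")
  case False then show ?thesis using rot_nz[OF cd] by simp
next
  case True
  then have "c = 1 \<or> c = -1" using cd by (simp add: power2_eq_1_iff)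
  then show ?thesis
  proof
    assume "c = 1"
    then have "rot c d = (\<lambda>z. z)" using True by (auto simp: rot_def fun_eq_iff)
    then show ?thesis by (simp add: distr_id2)
  next
    assume "c = -1"
    then have "rot c d = rot 0 1 \<circ> rot 0 1" using True by (auto simp: rot_def fun_eq_iff)
    moreover have "distr (lborel \<Otimes>\<^sub>M lborel) (lborel \<Otimes>\<^sub>M lborel) (rot 0 1 \<circ> rot 0 1)
        = distr (distr (lborel \<Otimes>\<^sub>M lborel) (lborel \<Otimes>\<^sub>M lborel) (rot 0 1)) (lborel \<Otimes>\<^sub>M lborel) (rot 0 1)"
      by (simp add: distr_distr)
    ultimately show ?thesis using rot_nz[of 0 1] by simp
  qed
qed

lemma (in prob_space) distr_pair_snd': "distr (M \<Otimes>\<^sub>M M) M snd = M"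
proof (intro measure_eqI)
  fix A assume A: "A \<in> sets (distr (M \<Otimes>\<^sub>M M) M snd)"
  from A have "emeasure (distr (M \<Otimes>\<^sub>M M) M snd) A = emeasure (M \<Otimes>\<^sub>M M) (space M \<times> A)"
    by (auto simp add: emeasure_distr space_pair_measure dest: sets.sets_into_space intro!: arg_cong2[where f=emeasure])
  with A show "emeasure (distr (M \<Otimes>\<^sub>M M) M snd) A = emeasure M A"
    by (simp add: emeasure_pair_measure_Times emeasure_space_1)
qed simp

lemma (in prob_space) indep_var_borel_lborel_iff:
  "indep_var lborel U lborel V \<longleftrightarrow> indep_var borel U borel (V :: 'a \<Rightarrow> real)"
  unfolding indep_var_def indep_vars_def by (simp add: case_bool_if if_distrib cong: if_cong)

lemma std_normal_rot:
  assumes cd: "c\<^sup>2 + d\<^sup>2 = 1"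
  shows "std_normal_density (c * x - d * y) * std_normal_density (d * x + c * y)
       = std_normal_density x * std_normal_density y"
proof -
  have "(c * x - d * y)\<^sup>2 + (d * x + c * y)\<^sup>2 = (c\<^sup>2 + d\<^sup>2) * (x\<^sup>2 + y\<^sup>2)"
    by (simp add: power2_eq_square algebra_simps)
  also have "\<dots> = x\<^sup>2 + y\<^sup>2" using cd by simp
  finally have e: "(c * x - d * y)\<^sup>2 + (d * x + c * y)\<^sup>2 = x\<^sup>2 + y\<^sup>2" .
  have "std_normal_density a * std_normal_density b = exp (- (a\<^sup>2 + b\<^sup>2) / 2) / (2 * pi)" for a b
  proof -
    have sq: "sqrt (2 * pi) * sqrt (2 * pi) = 2 * pi" by simp
    show ?thesis unfolding std_normal_density_def
      by (simp add: sq exp_add[symmetric] add_divide_distrib)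
  qed
  then show ?thesis using e by simp
qed

lemma N2_rot:
  assumes cd: "c\<^sup>2 + d\<^sup>2 = 1"
  defines "g \<equiv> (\<lambda>(x, y). ennreal (std_normal_density x) * ennreal (std_normal_density y))"
  shows "distr (density (lborel \<Otimes>\<^sub>M lborel) g) (lborel \<Otimes>\<^sub>M lborel) (rot c d) = density (lborel \<Otimes>\<^sub>M lborel) g"
proof -
  have gm: "g \<in> borel_measurable (lborel \<Otimes>\<^sub>M lborel)" unfolding g_def by measurable
  have ginv: "g (rot c d z) = g z" for z
    using std_normal_rot[OF cd] unfolding g_def rot_def
    by (cases z) (simp add: ennreal_mult[symmetric])
  have "density (lborel \<Otimes>\<^sub>M lborel) g = density (distr (lborel \<Otimes>\<^sub>M lborel) (lborel \<Otimes>\<^sub>M lborel) (rot c d)) g"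
    by (simp add: rot_lborel2[OF cd])
  also have "\<dots> = distr (density (lborel \<Otimes>\<^sub>M lborel) (\<lambda>z. g (rot c d z))) (lborel \<Otimes>\<^sub>M lborel) (rot c d)"
    by (rule density_distr[OF gm rot_measurable])
  also have "(\<lambda>z. g (rot c d z)) = g" by (simp add: ginv)
  finally show ?thesis by simp
qed

lemma (in prob_space) rotate_std_normal_pair:
  fixes R S :: "'a \<Rightarrow> real"
  assumes ind: "indep_var borel R borel S"
    and R: "distributed M lborel R std_normal_density"
    and S: "distributed M lborel S std_normal_density"
    and cd: "c\<^sup>2 + d\<^sup>2 = 1"
  shows "indep_var borel (\<lambda>\<omega>. c * R \<omega> - d * S \<omega>) borel (\<lambda>\<omega>. d * R \<omega> + c * S \<omega>)"
    and "distributed M lborel (\<lambda>\<omega>. c * R \<omega> - d * S \<omega>) std_normal_density"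
    and "distributed M lborel (\<lambda>\<omega>. d * R \<omega> + c * S \<omega>) std_normal_density"
proof -
  let ?N = "density lborel (\<lambda>x. ennreal (std_normal_density x))"
  let ?L = "lborel \<Otimes>\<^sub>M lborel :: (real \<times> real) measure"
  define g where "g = (\<lambda>(x, y). ennreal (std_normal_density x) * ennreal (std_normal_density y))"
  interpret N: prob_space ?N by (rule prob_space_normal_density) simp
  have Rm: "R \<in> measurable M lborel" using R by (rule distributed_measurable)
  have Sm: "S \<in> measurable M lborel" using S by (rule distributed_measurable)
  have Rb[measurable]: "R \<in> borel_measurable M" using Rm by simp
  have Sb[measurable]: "S \<in> borel_measurable M" using Sm by simp
  have dR: "distr M lborel R = ?N" using R by (simp add: distributed_def)
  have dS: "distr M lborel S = ?N" using S by (simp add: distributed_def)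
  have NN: "?N \<Otimes>\<^sub>M ?N = density ?L g"
    unfolding g_def
    using N.sigma_finite_measure_axioms lborel.sigma_finite_measure_axioms
    by (intro pair_measure_density) (auto simp del: zero_less_one intro: zero_less_one)
  have jRS: "distr M ?L (\<lambda>\<omega>. (R \<omega>, S \<omega>)) = ?N \<Otimes>\<^sub>M ?N"
    using ind indep_var_distribution_eq[of lborel R lborel S] dR dS
    by (simp add: indep_var_borel_lborel_iff)
  define P where "P = (\<lambda>\<omega>. c * R \<omega> - d * S \<omega>)"
  define Q where "Q = (\<lambda>\<omega>. d * R \<omega> + c * S \<omega>)"
  have PQ: "(\<lambda>\<omega>. (P \<omega>, Q \<omega>)) = rot c d \<circ> (\<lambda>\<omega>. (R \<omega>, S \<omega>))"
    by (auto simp: P_def Q_def rot_def)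
  have RSm: "(\<lambda>\<omega>. (R \<omega>, S \<omega>)) \<in> measurable M ?L" using Rm Sm by measurable
  have PQm: "(\<lambda>\<omega>. (P \<omega>, Q \<omega>)) \<in> measurable M ?L" unfolding PQ using RSm by measurable
  have jPQ: "distr M ?L (\<lambda>\<omega>. (P \<omega>, Q \<omega>)) = ?N \<Otimes>\<^sub>M ?N"
  proof -
    have "distr M ?L (\<lambda>\<omega>. (P \<omega>, Q \<omega>)) = distr (distr M ?L (\<lambda>\<omega>. (R \<omega>, S \<omega>))) ?L (rot c d)"
      unfolding PQ by (rule distr_distr[OF rot_measurable RSm, symmetric])
    also have "\<dots> = ?N \<Otimes>\<^sub>M ?N" unfolding jRS NN g_def by (rule N2_rot[OF cd])
    finally show ?thesis .
  qed
  have Pm: "P \<in> measurable M lborel" unfolding P_def using Rm Sm by measurable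
  have Qm: "Q \<in> measurable M lborel" unfolding Q_def using Rm Sm by measurable
  have dP: "distr M lborel P = ?N"
  proof -
    have "distr M lborel P = distr M lborel (fst \<circ> (\<lambda>\<omega>. (P \<omega>, Q \<omega>)))" by (simp add: o_def)
    also have "\<dots> = distr (distr M ?L (\<lambda>\<omega>. (P \<omega>, Q \<omega>))) lborel fst"
      by (rule distr_distr[symmetric]) (auto intro: PQm)
    also have "\<dots> = distr (?N \<Otimes>\<^sub>M ?N) ?N fst" unfolding jPQ by (rule distr_cong) auto
    also have "\<dots> = ?N" by (rule N.distr_pair_fst)
    finally show ?thesis .
  qed
  have dQ: "distr M lborel Q = ?N"
  proof -
    have "distr M lborel Q = distr M lborel (snd \<circ> (\<lambda>\<omega>. (P \<omega>, Q \<omega>)))" by (simp add: o_def)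
    also have "\<dots> = distr (distr M ?L (\<lambda>\<omega>. (P \<omega>, Q \<omega>))) lborel snd"
      by (rule distr_distr[symmetric]) (auto intro: PQm)
    also have "\<dots> = distr (?N \<Otimes>\<^sub>M ?N) ?N snd" unfolding jPQ by (rule distr_cong) auto
    also have "\<dots> = ?N" by (rule N.distr_pair_snd')
    finally show ?thesis .
  qed
  have "indep_var lborel P lborel Q"
    using indep_var_distribution_eq[of lborel P lborel Q] Pm Qm dP dQ jPQ by simp
  then show "indep_var borel (\<lambda>\<omega>. c * R \<omega> - d * S \<omega>) borel (\<lambda>\<omega>. d * R \<omega> + c * S \<omega>)"
    by (simp add: indep_var_borel_lborel_iff P_def Q_def)
  show "distributed M lborel (\<lambda>\<omega>. c * R \<omega> - d * S \<omega>) std_normal_density"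
    using dP Pm by (simp add: distributed_def P_def)
  show "distributed M lborel (\<lambda>\<omega>. d * R \<omega> + c * S \<omega>) std_normal_density"
    using dQ Qm by (simp add: distributed_def Q_def)
qed

lemma (in prob_space) indep_vars_pairs:
  fixes G :: "'k \<Rightarrow> 'a \<Rightarrow> real \<times> real"
  assumes fin: "finite K" and ne: "K \<noteq> {}" and indep: "indep_vars (\<lambda>_. borel) G K"
    and pair: "\<And>k. k \<in> K \<Longrightarrow> indep_var borel (\<lambda>\<omega>. fst (G k \<omega>)) borel (\<lambda>\<omega>. snd (G k \<omega>))"
  shows "indep_vars (\<lambda>_. borel) (\<lambda>(k, r) \<omega>. if r then fst (G k \<omega>) else snd (G k \<omega>)) (K \<times> UNIV)"
proof -
  define F where "F = (\<lambda>(k, r) \<omega>. if r then fst (G k \<omega>) else snd (G k \<omega>))"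
  have Gm: "G k \<in> borel_measurable M" if "k \<in> K" for k
    using indep that unfolding indep_vars_def by blast
  have Fm: "random_variable borel (F i)" if iK: "i \<in> K \<times> UNIV" for i
  proof -
    obtain k r where i: "i = (k, r)" "k \<in> K" using iK by (cases i) auto
    have [measurable]: "G k \<in> measurable M (borel \<Otimes>\<^sub>M borel)" using Gm i by (simp add: borel_prod)
    show ?thesis unfolding i F_def by simp measurable
  qed
  have "indep_vars (\<lambda>_. borel) F (K \<times> UNIV) \<longleftrightarrow>
    (\<forall>A\<in>(\<Pi> i\<in>K \<times> UNIV. sets borel). prob (\<Inter>j\<in>K \<times> UNIV. F j -` A j \<inter> space M) = (\<Prod>j\<in>K \<times> UNIV. prob (F j -` A j \<inter> space M)))"
    by (rule indep_vars_finite) (use fin ne Fm in \<open>auto simp: sets.Int_stable sets.sigma_sets_eq[where M=borel, simplified]\<close>)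
  also have "\<dots>"
  proof
    fix A :: "'k \<times> bool \<Rightarrow> real set" assume A: "A \<in> (\<Pi> i\<in>K \<times> UNIV. sets borel)"
    define B where "B = (\<lambda>k. A (k, True) \<times> A (k, False))"
    have Bs: "B k \<in> sets borel" if "k \<in> K" for k
    proof -
      have "A (k, True) \<in> sets borel" "A (k, False) \<in> sets borel" using A that by auto
      then have "B k \<in> sets (borel \<Otimes>\<^sub>M borel)" unfolding B_def by (rule pair_measureI)
      then show ?thesis by (metis borel_prod)
    qed
    have "(\<Inter>j\<in>K \<times> UNIV. F j -` A j \<inter> space M) = (\<Inter>k\<in>K. G k -` B k \<inter> space M)"
      using ne by (auto simp: F_def B_def mem_Times_iff) (metis (full_types))+
    then have "prob (\<Inter>j\<in>K \<times> UNIV. F j -` A j \<inter> space M) = prob (\<Inter>k\<in>K. G k -` B k \<inter> space M)"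
      by simp
    also have "\<dots> = (\<Prod>k\<in>K. prob (G k -` B k \<inter> space M))"
      by (rule indep_varsD[OF indep ne fin]) (auto intro: Bs)
    also have "\<dots> = (\<Prod>k\<in>K. prob (F (k, True) -` A (k, True) \<inter> space M) * prob (F (k, False) -` A (k, False) \<inter> space M))"
    proof (intro prod.cong refl)
      fix k assume k: "k \<in> K"
      have "prob (G k -` B k \<inter> space M) = prob ((\<lambda>x. (fst (G k x), snd (G k x))) -` (A (k, True) \<times> A (k, False)) \<inter> space M)"
        by (simp add: B_def)
      also have "\<dots> = prob ((\<lambda>\<omega>. fst (G k \<omega>)) -` A (k, True) \<inter> space M) * prob ((\<lambda>\<omega>. snd (G k \<omega>)) -` A (k, False) \<inter> space M)"
        by (rule indep_varD[OF pair[OF k]]) (use A k in auto)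
      finally show "prob (G k -` B k \<inter> space M) = prob (F (k, True) -` A (k, True) \<inter> space M) * prob (F (k, False) -` A (k, False) \<inter> space M)"
        by (simp add: F_def)
    qed
    also have "\<dots> = (\<Prod>k\<in>K. \<Prod>r\<in>UNIV. prob (F (k, r) -` A (k, r) \<inter> space M))"
      by (simp add: UNIV_bool mult.commute)
    also have "\<dots> = (\<Prod>j\<in>K \<times> UNIV. prob (F j -` A j \<inter> space M))"
      by (subst prod.cartesian_product) (simp add: case_prod_beta')
    finally show "prob (\<Inter>j\<in>K \<times> UNIV. F j -` A j \<inter> space M) = (\<Prod>j\<in>K \<times> UNIV. prob (F j -` A j \<inter> space M))" .
  qed
  finally show ?thesis unfolding F_def .
qed

lemma (in prob_space) indep_vars_reindex:
  assumes ind: "indep_vars (\<lambda>_. N) X I" and inj: "inj_on h K" and sub: "h ` K \<subseteq> I"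
  shows "indep_vars (\<lambda>_. N) (\<lambda>k. X (h k)) K"
proof -
  have "indep_vars (\<lambda>k. PiM {h k} (\<lambda>_. N)) (\<lambda>k \<omega>. restrict (\<lambda>i. X i \<omega>) {h k}) K"
    by (rule indep_vars_restrict[OF ind]) (use sub inj in \<open>auto simp: disjoint_family_on_def inj_on_def\<close>)
  then have "indep_vars (\<lambda>_. N) (\<lambda>k \<omega>. (\<lambda>f. f (h k)) (restrict (\<lambda>i. X i \<omega>) {h k})) K"
    by (rule indep_vars_compose2) (auto intro: measurable_component_singleton)
  then show ?thesis by simp
qed

lemma (in prob_space) indep_var_from_vars:
  assumes ind: "indep_vars (\<lambda>_. N) X I" and "i \<in> I" "j \<in> I" "i \<noteq> j"
  shows "indep_var N (X i) N (X j)"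
proof -
  have "indep_vars (\<lambda>_. N) (\<lambda>b. X (if b then i else j)) UNIV"
    by (rule indep_vars_reindex[OF ind]) (use assms in \<open>auto simp: inj_on_def\<close>)
  then show ?thesis unfolding indep_var_def
    by (rule indep_vars_cong[THEN iffD1, rotated -1]) (auto split: bool.split)
qed

lemma cnj_key:
  fixes a x :: complex
  defines "v \<equiv> (if x = 0 then 1 else cnj x / complex_of_real (cmod x))"
  shows "cnj a * x = complex_of_real (cmod x) * cnj (a * v)"
    and "(Re v)\<^sup>2 + (Im v)\<^sup>2 = 1"
proof -
  show "cnj a * x = complex_of_real (cmod x) * cnj (a * v)"
  proof (cases "x = 0")
    case False
    then have "cmod x \<noteq> 0" by simp
    then show ?thesis using False unfolding v_def by (simp add: field_simps)
  qed (simp add: v_def)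
  have "cmod v = 1"
  proof (cases "x = 0")
    case False
    then show ?thesis unfolding v_def by (simp add: norm_divide)
  qed (simp add: v_def)
  then show "(Re v)\<^sup>2 + (Im v)\<^sup>2 = 1"
    using cmod_power2[of v] by simp
qed

lemma (in prob_space) column_law:
  fixes a :: "nat \<Rightarrow> 'a \<Rightarrow> complex" and x0 :: "nat \<Rightarrow> complex"
  assumes indep: "indep_vars (\<lambda>_. borel) (\<lambda>(k, r) \<omega>. if r then Re (a k \<omega>) else Im (a k \<omega>)) ({..<n} \<times> UNIV)"
    and re: "\<And>k. k < n \<Longrightarrow> distributed M lborel (\<lambda>\<omega>. Re (a k \<omega>)) std_normal_density"
    and im: "\<And>k. k < n \<Longrightarrow> distributed M lborel (\<lambda>\<omega>. Im (a k \<omega>)) std_normal_density"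
    and nrm: "(\<Sum>k<n. (cmod (x0 k))\<^sup>2) = 1" and t: "0 \<le> t"
  shows "prob {\<omega> \<in> space M. (cmod (\<Sum>k<n. cnj (a k \<omega>) * x0 k))\<^sup>2 \<le> t} = 1 - exp (- t / 2)"
proof -
  define v where "v = (\<lambda>k. if x0 k = 0 then 1 else cnj (x0 k) / complex_of_real (cmod (x0 k)))"
  define c where "c = (\<lambda>k. Re (v k))"
  define d where "d = (\<lambda>k. Im (v k))"
  have cd: "(c k)\<^sup>2 + (d k)\<^sup>2 = 1" for k
    unfolding c_def d_def v_def by (rule cnj_key(2))
  define P where "P = (\<lambda>k \<omega>. c k * Re (a k \<omega>) - d k * Im (a k \<omega>))"
  define Q where "Q = (\<lambda>k \<omega>. d k * Re (a k \<omega>) + c k * Im (a k \<omega>))"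
  define U where "U = (\<lambda>\<omega>. \<Sum>k<n. cmod (x0 k) * P k \<omega>)"
  define V where "V = (\<lambda>\<omega>. \<Sum>k<n. cmod (x0 k) * Q k \<omega>)"
  have W: "(cmod (\<Sum>k<n. cnj (a k \<omega>) * x0 k))\<^sup>2 = (U \<omega>)\<^sup>2 + (V \<omega>)\<^sup>2" for \<omega>
  proof -
    have key2: "cnj (a k \<omega>) * x0 k = complex_of_real (cmod (x0 k)) * cnj (a k \<omega> * v k)" for k
      unfolding v_def by (rule cnj_key(1))
    have av: "a k \<omega> * v k = Complex (P k \<omega>) (Q k \<omega>)" for k
      by (simp add: P_def Q_def c_def d_def complex_eq_iff algebra_simps)
    have "(\<Sum>k<n. cnj (a k \<omega>) * x0 k) = (\<Sum>k<n. complex_of_real (cmod (x0 k)) * cnj (Complex (P k \<omega>) (Q k \<omega>)))"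
      by (intro sum.cong refl) (simp only: key2 av)
    also have "\<dots> = Complex (U \<omega>) (- V \<omega>)"
      by (simp add: complex_eq_iff U_def V_def Re_sum Im_sum sum_negf)
    finally show ?thesis by (simp add: cmod_power2)
  qed
  have n: "n \<noteq> 0" using nrm by (cases n) auto
  define F where "F = (\<lambda>(k, r) \<omega>. if r then Re (a k \<omega>) else Im (a k \<omega>))"
  have indF: "indep_vars (\<lambda>_. borel) F ({..<n} \<times> UNIV)" using indep unfolding F_def .
  have pairRS: "indep_var borel (\<lambda>\<omega>. Re (a k \<omega>)) borel (\<lambda>\<omega>. Im (a k \<omega>))" if "k < n" for k
    using indep_var_from_vars[OF indF, of "(k, True)" "(k, False)"] that by (simp add: F_def)
  have rotPQ: "indep_var borel (P k) borel (Q k)"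
      "distributed M lborel (P k) std_normal_density"
      "distributed M lborel (Q k) std_normal_density" if "k < n" for k
    using rotate_std_normal_pair[OF pairRS[OF that] re[OF that] im[OF that] cd[of k]]
    unfolding P_def Q_def by auto
  define G where "G = (\<lambda>k \<omega>. (P k \<omega>, Q k \<omega>))"
  have indG: "indep_vars (\<lambda>_. borel) G {..<n}"
  proof -
    have "indep_vars (\<lambda>k. PiM ({k} \<times> UNIV) (\<lambda>_. borel)) (\<lambda>k \<omega>. restrict (\<lambda>i. F i \<omega>) ({k} \<times> UNIV)) {..<n}"
      by (rule indep_vars_restrict[OF indF]) (auto simp: disjoint_family_on_def)
    then have "indep_vars (\<lambda>_. borel)
        (\<lambda>k \<omega>. (\<lambda>f. (c k * f (k, True) - d k * f (k, False), d k * f (k, True) + c k * f (k, False)))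
                (restrict (\<lambda>i. F i \<omega>) ({k} \<times> UNIV))) {..<n}"
    proof (rule indep_vars_compose2)
      fix k assume "k \<in> {..<n}"
      have m1: "(\<lambda>f. f (k, True)) \<in> borel_measurable (PiM ({k} \<times> UNIV) (\<lambda>_. borel))"
        by (rule measurable_component_singleton) auto
      have m2: "(\<lambda>f. f (k, False)) \<in> borel_measurable (PiM ({k} \<times> UNIV) (\<lambda>_. borel))"
        by (rule measurable_component_singleton) auto
      have "(\<lambda>f. (c k * f (k, True) - d k * f (k, False), d k * f (k, True) + c k * f (k, False)))
          \<in> measurable (PiM ({k} \<times> UNIV) (\<lambda>_. borel)) (borel \<Otimes>\<^sub>M borel)"
        using m1 m2 by measurable
      then show "(\<lambda>f. (c k * f (k, True) - d k * f (k, False), d k * f (k, True) + c k * f (k, False)))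
          \<in> measurable (PiM ({k} \<times> UNIV) (\<lambda>_. borel)) borel"
        by (simp add: borel_prod)
    qed
    then show ?thesis
      by (rule indep_vars_cong[THEN iffD1, rotated -1]) (auto simp: G_def P_def Q_def F_def fun_eq_iff)
  qed
  have indPQ: "indep_vars (\<lambda>_. borel) (\<lambda>(k, r) \<omega>. if r then fst (G k \<omega>) else snd (G k \<omega>)) ({..<n} \<times> UNIV)"
    by (rule indep_vars_pairs[OF _ _ indG]) (use n rotPQ(1) in \<open>auto simp: G_def\<close>)
  define H where "H = (\<lambda>(k, r) \<omega>. if r then P k \<omega> else Q k \<omega>)"
  have indH: "indep_vars (\<lambda>_. borel) H ({..<n} \<times> UNIV)"
    using indPQ unfolding H_def G_def fst_conv snd_conv .
  have indUV: "indep_var borel U borel V"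
  proof -
    have "indep_var (PiM ({..<n} \<times> {True}) (\<lambda>_. borel)) (\<lambda>\<omega>. restrict (\<lambda>i. H i \<omega>) ({..<n} \<times> {True}))
                    (PiM ({..<n} \<times> {False}) (\<lambda>_. borel)) (\<lambda>\<omega>. restrict (\<lambda>i. H i \<omega>) ({..<n} \<times> {False}))"
      by (rule indep_var_restrict[OF indH]) auto
    then have "indep_var borel ((\<lambda>f. \<Sum>k<n. cmod (x0 k) * f (k, True)) \<circ> (\<lambda>\<omega>. restrict (\<lambda>i. H i \<omega>) ({..<n} \<times> {True})))
                    borel ((\<lambda>f. \<Sum>k<n. cmod (x0 k) * f (k, False)) \<circ> (\<lambda>\<omega>. restrict (\<lambda>i. H i \<omega>) ({..<n} \<times> {False})))"
    proof (rule indep_var_compose)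
      show "(\<lambda>f. \<Sum>k<n. cmod (x0 k) * f (k, True)) \<in> borel_measurable (PiM ({..<n} \<times> {True}) (\<lambda>_. borel))"
        by (intro borel_measurable_sum borel_measurable_times measurable_const measurable_component_singleton) auto
      show "(\<lambda>f. \<Sum>k<n. cmod (x0 k) * f (k, False)) \<in> borel_measurable (PiM ({..<n} \<times> {False}) (\<lambda>_. borel))"
        by (intro borel_measurable_sum borel_measurable_times measurable_const measurable_component_singleton) auto
    qed
    also have "(\<lambda>f. \<Sum>k<n. cmod (x0 k) * f (k, True)) \<circ> (\<lambda>\<omega>. restrict (\<lambda>i. H i \<omega>) ({..<n} \<times> {True})) = U"
      by (auto simp: U_def H_def fun_eq_iff)
    also have "(\<lambda>f. \<Sum>k<n. cmod (x0 k) * f (k, False)) \<circ> (\<lambda>\<omega>. restrict (\<lambda>i. H i \<omega>) ({..<n} \<times> {False})) = V"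
      by (auto simp: V_def H_def fun_eq_iff)
    finally show ?thesis .
  qed
  define K' where "K' = {k. k < n \<and> x0 k \<noteq> 0}"
  have K'fin: "finite K'" unfolding K'_def by simp
  have K'sub: "K' \<subseteq> {..<n}" unfolding K'_def by auto
  have sumK': "(\<Sum>k\<in>K'. f k) = (\<Sum>k<n. f k)" if "\<And>k. k < n \<Longrightarrow> x0 k = 0 \<Longrightarrow> f k = 0" for f :: "nat \<Rightarrow> real"
    by (rule sum.mono_neutral_left) (use that in \<open>auto simp: K'_def\<close>)
  have K'ne: "K' \<noteq> {}"
  proof
    assume "K' = {}"
    then have "(\<Sum>k<n. (cmod (x0 k))\<^sup>2) = 0"
      using sumK'[of "\<lambda>k. (cmod (x0 k))\<^sup>2"] by simp
    then show False using nrm by simp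
  qed
  have sig: "sqrt (\<Sum>k\<in>K'. (cmod (x0 k))\<^sup>2) = 1"
    using sumK'[of "\<lambda>k. (cmod (x0 k))\<^sup>2"] nrm by simp
  have normal_sum: "distributed M lborel (\<lambda>\<omega>. \<Sum>k<n. cmod (x0 k) * Y k \<omega>) std_normal_density"
    if indY: "indep_vars (\<lambda>_. borel) Y K'" and dY: "\<And>k. k < n \<Longrightarrow> distributed M lborel (Y k) std_normal_density"
    for Y :: "nat \<Rightarrow> 'a \<Rightarrow> real"
  proof -
    have "distributed M lborel (\<lambda>\<omega>. \<Sum>k\<in>K'. cmod (x0 k) * Y k \<omega>)
        (normal_density (\<Sum>k\<in>K'. 0) (sqrt (\<Sum>k\<in>K'. (cmod (x0 k))\<^sup>2)))"
    proof (rule sum_indep_normal[OF K'fin K'ne])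
      show "indep_vars (\<lambda>i. borel) (\<lambda>k \<omega>. cmod (x0 k) * Y k \<omega>) K'"
        by (rule indep_vars_compose2[OF indY, where Y="\<lambda>k y. cmod (x0 k) * y"]) auto
      fix k assume k: "k \<in> K'"
      then show "0 < cmod (x0 k)" by (simp add: K'_def)
      have "distributed M lborel (\<lambda>\<omega>. 0 + cmod (x0 k) * Y k \<omega>) (normal_density (0 + cmod (x0 k) * 0) (\<bar>cmod (x0 k)\<bar> * 1))"
        by (rule normal_density_affine[OF dY]) (use k in \<open>auto simp: K'_def\<close>)
      then show "distributed M lborel (\<lambda>\<omega>. cmod (x0 k) * Y k \<omega>) (normal_density 0 (cmod (x0 k)))"
        by simp
    qed
    moreover have "(\<lambda>\<omega>. \<Sum>k\<in>K'. cmod (x0 k) * Y k \<omega>) = (\<lambda>\<omega>. \<Sum>k<n. cmod (x0 k) * Y k \<omega>)"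
      by (rule ext, rule sumK') simp
    ultimately show ?thesis using sig by simp
  qed
  have dU: "distributed M lborel U std_normal_density"
    unfolding U_def
  proof (rule normal_sum)
    show "indep_vars (\<lambda>_. borel) P K'"
      using indep_vars_reindex[OF indH, of "\<lambda>k. (k, True)" K'] K'sub
      by (auto simp: inj_on_def H_def)
  qed (use rotPQ(2) in auto)
  have dV: "distributed M lborel V std_normal_density"
    unfolding V_def
  proof (rule normal_sum)
    show "indep_vars (\<lambda>_. borel) Q K'"
      using indep_vars_reindex[OF indH, of "\<lambda>k. (k, False)" K'] K'sub
      by (auto simp: inj_on_def H_def)
  qed (use rotPQ(3) in auto)
  have "prob {\<omega> \<in> space M. (U \<omega>)\<^sup>2 + (V \<omega>)\<^sup>2 \<le> t} = 1 - exp (- t / 2)"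
    by (rule prob_sumsq_le[OF indUV dU dV t])
  then show ?thesis by (simp add: W)
qed

lemma card_filter_sort:
  "length (filter P (sort xs)) = length (filter P (xs :: real list))"
proof -
  have "mset (filter P (sort xs)) = mset (filter P xs)" by simp
  then show ?thesis by (metis size_mset)
qed

lemma sorted_nth_le_iff:
  fixes ys :: "real list"
  assumes s: "sorted ys" and m: "1 \<le> m" "m \<le> length ys"
  shows "ys ! (m - 1) \<le> c \<longleftrightarrow> m \<le> length (filter (\<lambda>x. x \<le> c) ys)"
proof
  assume le: "ys ! (m - 1) \<le> c"
  have "{..<m} \<subseteq> {i. i < length ys \<and> ys ! i \<le> c}"
  proof
    fix i assume "i \<in> {..<m}"
    then have i: "i \<le> m - 1" "i < length ys" using m by auto
    have "ys ! i \<le> ys ! (m - 1)" by (rule sorted_nth_mono[OF s i(1)]) (use m in auto)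
    then show "i \<in> {i. i < length ys \<and> ys ! i \<le> c}" using i le by auto
  qed
  then have "card {..<m} \<le> card {i. i < length ys \<and> ys ! i \<le> c}"
    by (rule card_mono[rotated]) auto
  then show "m \<le> length (filter (\<lambda>x. x \<le> c) ys)"
    by (simp add: length_filter_conv_card)
next
  assume ge: "m \<le> length (filter (\<lambda>x. x \<le> c) ys)"
  show "ys ! (m - 1) \<le> c"
  proof (rule ccontr)
    assume "\<not> ys ! (m - 1) \<le> c"
    then have gt: "ys ! (m - 1) > c" by simp
    have "{i. i < length ys \<and> ys ! i \<le> c} \<subseteq> {..<m - 1}"
    proof
      fix i assume i: "i \<in> {i. i < length ys \<and> ys ! i \<le> c}"
      show "i \<in> {..<m - 1}"
      proof (rule ccontr)
        assume "i \<notin> {..<m - 1}"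
        then have "m - 1 \<le> i" by simp
        then have "ys ! (m - 1) \<le> ys ! i" using i by (intro sorted_nth_mono[OF s]) auto
        then show False using i gt by simp
      qed
    qed
    then have "card {i. i < length ys \<and> ys ! i \<le> c} \<le> card {..<m - 1}"
      by (rule card_mono[rotated]) auto
    then show False using ge m by (simp add: length_filter_conv_card)
  qed
qed

lemma ord_stat_le_iff:
  fixes f :: "nat \<Rightarrow> real"
  assumes m: "1 \<le> m" "m \<le> N"
  shows "ord_stat (map f [0..<N]) m \<le> c \<longleftrightarrow> m \<le> card {j \<in> {..<N}. f j \<le> c}"
proof -
  have "ord_stat (map f [0..<N]) m \<le> c \<longleftrightarrow> m \<le> length (filter (\<lambda>x. x \<le> c) (sort (map f [0..<N])))"
    unfolding ord_stat_def by (rule sorted_nth_le_iff) (use m in auto)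
  also have "length (filter (\<lambda>x. x \<le> c) (sort (map f [0..<N]))) = card {j \<in> {..<N}. f j \<le> c}"
    by (subst card_filter_sort) (auto simp: length_filter_conv_card intro!: arg_cong[where f=card])
  finally show ?thesis .
qed

lemma poly_ineq8: "8 * r * (1 - r) ^ 3 \<le> (1::real)"
proof -
  have "1 - 8 * r * (1 - r) ^ 3 = 8 * (r\<^sup>2 - 3 * r / 2 + 1 / 4)\<^sup>2 + 2 * (r - 1 / 2)\<^sup>2"
    by (simp add: power2_eq_square power3_eq_cube algebra_simps)
  moreover have "0 \<le> 8 * (r\<^sup>2 - 3 * r / 2 + 1 / 4)\<^sup>2 + 2 * (r - 1 / 2)\<^sup>2" by simp
  ultimately show ?thesis by linarith
qed

lemma exp_half_ineq:
  assumes "0 \<le> (d::real)"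
  shows "d / 2 * exp (- d / 2) \<le> 1 - exp (- d / 2)"
proof -
  have "1 + d / 2 \<le> exp (d / 2)" by (rule exp_ge_add_one_self)
  then have "(1 + d / 2) * exp (- d / 2) \<le> exp (d / 2) * exp (- d / 2)"
    by (rule mult_right_mono) simp
  also have "exp (d / 2) * exp (- d / 2) = 1" by (simp add: exp_minus field_simps)
  finally show ?thesis by (simp add: algebra_simps)
qed

lemma (in prob_space) prob_ge_compl:
  fixes f :: "'a \<Rightarrow> real"
  assumes f: "f \<in> borel_measurable M"
  shows "prob {\<omega>\<in>space M. a \<le> f \<omega>} \<ge> 1 - prob {\<omega>\<in>space M. f \<omega> \<le> a}"
proof -
  have "space M = {\<omega>\<in>space M. a \<le> f \<omega>} \<union> {\<omega>\<in>space M. f \<omega> \<le> a}" by auto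
  then have "1 = prob ({\<omega>\<in>space M. a \<le> f \<omega>} \<union> {\<omega>\<in>space M. f \<omega> \<le> a})"
    using prob_space by simp
  also have "\<dots> \<le> prob {\<omega>\<in>space M. a \<le> f \<omega>} + prob {\<omega>\<in>space M. f \<omega> \<le> a}"
  proof (rule measure_Un_le)
    show "{\<omega>\<in>space M. a \<le> f \<omega>} \<in> events" using f by measurable
    show "{\<omega>\<in>space M. f \<omega> \<le> a} \<in> events" using f by measurable
  qed
  finally show ?thesis by simp
qed

lemma (in prob_space) count_tail:
  fixes Z :: "nat \<Rightarrow> 'a \<Rightarrow> real"
  assumes indZ: "indep_vars (\<lambda>_. borel) Z {..<N}"
    and pZ: "\<And>j. j < N \<Longrightarrow> prob {\<omega> \<in> space M. Z j \<omega> \<le> c} = p"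
    and p: "0 \<le> p" "p \<le> 1"
    and V: "\<And>r. 0 \<le> r \<Longrightarrow> r \<le> p \<Longrightarrow> r * (1 - r) \<le> V"
    and l: "0 < l"
  shows "prob {\<omega>\<in>space M. real (card {j \<in> {..<N}. Z j \<omega> \<le> c}) \<le> a}
           \<le> exp (l * a + real N * (- p * l + V * l\<^sup>2 / 2))"
proof -
  define X where "X = (\<lambda>j \<omega>. if Z j \<omega> \<le> c then 1 else (0::real))"
  have Zm: "Z j \<in> borel_measurable M" if "j < N" for j
    using indZ that unfolding indep_vars_def by auto
  have indX: "indep_vars (\<lambda>_. borel) X {..<N}"
    unfolding X_def by (rule indep_vars_compose2[OF indZ, where Y="\<lambda>j z. if z \<le> c then 1 else (0::real)"]) auto
  have cnt: "(\<Sum>j\<in>{..<N}. X j \<omega>) = real (card {j \<in> {..<N}. Z j \<omega> \<le> c})" for \<omega>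
    unfolding X_def by (simp add: sum.If_cases Int_def conj_commute)
  have "prob {\<omega>\<in>space M. (\<Sum>j\<in>{..<N}. X j \<omega>) \<le> a} \<le> exp (l * a) * (1 - p * (1 - exp (-l))) ^ card {..<N}"
  proof (rule chernoff_count_le[OF _ indX _ _ p l])
    fix j assume j: "j \<in> {..<N}"
    have "{\<omega> \<in> space M. X j \<omega> = 1} = {\<omega> \<in> space M. Z j \<omega> \<le> c}" by (auto simp: X_def)
    then show "p \<le> prob {\<omega> \<in> space M. X j \<omega> = 1}" using pZ j by simp
  qed (auto simp: X_def)
  also have "(1 - p * (1 - exp (-l))) ^ card {..<N} \<le> exp (- p * l + V * l\<^sup>2 / 2) ^ N"
  proof -
    have pos: "0 < 1 - p + p * exp (-l)"
    proof (cases "p = 1")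
      case False then have "0 < 1 - p" using p by simp
      then show ?thesis using p by (simp add: add_pos_nonneg)
    qed simp
    have "1 - p * (1 - exp (-l)) = exp (ln (1 - p + p * exp (-l)))"
      using pos by (simp add: algebra_simps)
    also have "\<dots> \<le> exp (- p * l + V * l\<^sup>2 / 2)"
      using mgf_bound_aux[OF p V] l by simp
    finally have b: "1 - p * (1 - exp (-l)) \<le> exp (- p * l + V * l\<^sup>2 / 2)" .
    have "0 \<le> 1 - p * (1 - exp (-l))" using pos by (simp add: algebra_simps)
    then show ?thesis using b by (simp add: power_mono)
  qed
  also have "exp (l * a) * exp (- p * l + V * l\<^sup>2 / 2) ^ N = exp (l * a + real N * (- p * l + V * l\<^sup>2 / 2))"
    by (simp add: exp_of_nat_mult[symmetric] exp_add)
  finally show ?thesis by (simp add: cnt mult_left_mono)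
qed

lemma (in prob_space) final_bounds:
  fixes Z :: "nat \<Rightarrow> 'a \<Rightarrow> real" and N m :: nat
  assumes indZ: "indep_vars (\<lambda>_. borel) Z {..<N}"
    and law: "\<And>j t. j < N \<Longrightarrow> 0 \<le> t \<Longrightarrow> prob {\<omega> \<in> space M. Z j \<omega> \<le> t} = 1 - exp (- t / 2)"
    and m_lt: "m < N"
  shows "(\<forall>\<delta>>0. 1 \<le> m \<longrightarrow>
            prob {\<omega> \<in> space M. ord_stat (map (\<lambda>j. Z j \<omega>) [0..<N]) m \<le> tau_star m N + \<delta>}
              \<ge> 1 - exp (- (real N / 2) * \<delta>\<^sup>2 * exp (- \<delta>) * \<bar>1 - real m / real N\<bar>\<^sup>2))
       \<and> (\<forall>\<epsilon>>0.
            prob {\<omega> \<in> space M. real (card {i \<in> {..<N}. Z i \<omega> \<le> tau_star m N}) \<ge> real m * (1 - \<epsilon>)}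
              \<ge> 1 - 2 * exp (- 4 * \<epsilon>\<^sup>2 * \<bar>1 - real m / real N\<bar>\<^sup>2 * (real m)\<^sup>2 / real N))"
proof -
  define \<rho> where "\<rho> = real m / real N"
  have Npos: "0 < real N" using m_lt by simp
  have \<rho>: "0 \<le> \<rho>" "\<rho> < 1" unfolding \<rho>_def using m_lt by (auto simp: divide_less_eq)
  have mN: "real m = real N * \<rho>" unfolding \<rho>_def using Npos by simp
  define ts where "ts = tau_star m N"
  have ts_def': "ts = - 2 * ln (1 - \<rho>)" unfolding ts_def tau_star_def \<rho>_def ..
  have ts0: "0 \<le> ts" unfolding ts_def' using \<rho> by simp
  have ets: "exp (- ts / 2) = 1 - \<rho>" unfolding ts_def' using \<rho> by simp
  have Zm: "Z j \<in> borel_measurable M" if "j < N" for j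
    using indZ that unfolding indep_vars_def by auto
  define cnt where "cnt = (\<lambda>c \<omega>. real (card {j \<in> {..<N}. Z j \<omega> \<le> c}))"
  have cntm: "cnt c \<in> borel_measurable M" for c
  proof -
    have "cnt c = (\<lambda>\<omega>. \<Sum>j\<in>{..<N}. if Z j \<omega> \<le> c then 1 else 0)"
      unfolding cnt_def by (simp add: sum.If_cases Int_def conj_commute fun_eq_iff)
    also have "\<dots> \<in> borel_measurable M"
      by (intro borel_measurable_sum) (use Zm in measurable)
    finally show ?thesis .
  qed
  have part1: "prob {\<omega> \<in> space M. ord_stat (map (\<lambda>j. Z j \<omega>) [0..<N]) m \<le> ts + \<delta>}
              \<ge> 1 - exp (- (real N / 2) * \<delta>\<^sup>2 * exp (- \<delta>) * \<bar>1 - \<rho>\<bar>\<^sup>2)"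
    if \<delta>: "\<delta> > 0" and m1: "1 \<le> m" for \<delta>
  proof -
    define c where "c = ts + \<delta>"
    define p1 where "p1 = 1 - exp (- c / 2)"
    have ec: "exp (- c / 2) = (1 - \<rho>) * exp (- \<delta> / 2)"
    proof -
      have "- c / 2 = - ts / 2 + - \<delta> / 2" unfolding c_def by (simp add: field_simps)
      then have "exp (- c / 2) = exp (- ts / 2) * exp (- \<delta> / 2)" by (simp only: exp_add)
      then show ?thesis using ets by simp
    qed
    define g where "g = (1 - \<rho>) * (1 - exp (- \<delta> / 2))"
    have p1g: "p1 = \<rho> + g" unfolding p1_def g_def ec by (simp add: algebra_simps)
    have g0: "0 < g" unfolding g_def using \<rho> \<delta> by simp
    have c0: "0 \<le> c" unfolding c_def using ts0 \<delta> by simp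
    have p1r: "0 \<le> p1" "p1 \<le> 1" unfolding p1_def using c0 by auto
    have "{\<omega> \<in> space M. ord_stat (map (\<lambda>j. Z j \<omega>) [0..<N]) m \<le> ts + \<delta>} = {\<omega> \<in> space M. real m \<le> cnt c \<omega>}"
      using ord_stat_le_iff[of m N] m1 m_lt by (auto simp: cnt_def c_def)
    moreover have "prob {\<omega> \<in> space M. real m \<le> cnt c \<omega>} \<ge> 1 - prob {\<omega> \<in> space M. cnt c \<omega> \<le> real m}"
      by (rule prob_ge_compl[OF cntm])
    moreover have "prob {\<omega> \<in> space M. cnt c \<omega> \<le> real m} \<le> exp ((4 * g) * real m + real N * (- p1 * (4 * g) + (1/4) * (4 * g)\<^sup>2 / 2))"
      unfolding cnt_def
    proof (rule count_tail[OF indZ _ p1r])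
      show "prob {\<omega> \<in> space M. Z j \<omega> \<le> c} = p1" if "j < N" for j
        using law[OF that c0] by (simp add: p1_def)
      show "r * (1 - r) \<le> 1 / 4" for r :: real
        using zero_le_power2[of "r - 1/2"] by (simp add: power2_eq_square algebra_simps)
    qed (use g0 in auto)
    moreover have "(4 * g) * real m + real N * (- p1 * (4 * g) + (1/4) * (4 * g)\<^sup>2 / 2) = - 2 * real N * g\<^sup>2"
      unfolding mN p1g by (simp add: power2_eq_square algebra_simps)
    moreover have "- 2 * real N * g\<^sup>2 \<le> - (real N / 2) * \<delta>\<^sup>2 * exp (- \<delta>) * \<bar>1 - \<rho>\<bar>\<^sup>2"
    proof -
      have e: "\<delta> / 2 * exp (- \<delta> / 2) \<le> 1 - exp (- \<delta> / 2)" using exp_half_ineq[of \<delta>] \<delta> by simp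
      have "(\<delta> * exp (- \<delta> / 2))\<^sup>2 \<le> (2 * (1 - exp (- \<delta> / 2)))\<^sup>2"
        by (rule power_mono) (use e \<delta> in auto)
      then have "\<delta>\<^sup>2 * (exp (- \<delta> / 2))\<^sup>2 \<le> 2\<^sup>2 * (1 - exp (- \<delta> / 2))\<^sup>2"
        by (simp only: power_mult_distrib)
      moreover have "exp (- \<delta>) = (exp (- \<delta> / 2))\<^sup>2"
        by (simp add: power2_eq_square exp_add[symmetric])
      ultimately have "\<delta>\<^sup>2 * exp (- \<delta>) \<le> 4 * (1 - exp (- \<delta> / 2))\<^sup>2"
        by simp
      then have "\<delta>\<^sup>2 * exp (- \<delta>) * (1 - \<rho>)\<^sup>2 \<le> 4 * (1 - exp (- \<delta> / 2))\<^sup>2 * (1 - \<rho>)\<^sup>2"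
        by (rule mult_right_mono) simp
      also have "\<dots> = 4 * g\<^sup>2" unfolding g_def by (simp add: power_mult_distrib)
      finally have "\<delta>\<^sup>2 * exp (- \<delta>) * (1 - \<rho>)\<^sup>2 \<le> 4 * g\<^sup>2" .
      then have "real N * (\<delta>\<^sup>2 * exp (- \<delta>) * (1 - \<rho>)\<^sup>2) \<le> real N * (4 * g\<^sup>2)"
        by (rule mult_left_mono) simp
      then show ?thesis by (simp add: algebra_simps)
    qed
    ultimately show ?thesis by (smt (verit) exp_le_cancel_iff)
  qed
  have part2: "prob {\<omega> \<in> space M. real (card {i \<in> {..<N}. Z i \<omega> \<le> ts}) \<ge> real m * (1 - \<epsilon>)}
              \<ge> 1 - 2 * exp (- 4 * \<epsilon>\<^sup>2 * \<bar>1 - \<rho>\<bar>\<^sup>2 * (real m)\<^sup>2 / real N)"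
    if \<epsilon>: "\<epsilon> > 0" for \<epsilon>
  proof (cases "m = 0 \<or> 1 \<le> \<epsilon>")
    case True
    then have "real m * (1 - \<epsilon>) \<le> 0" by (auto simp: mult_nonneg_nonpos)
    then have "{\<omega> \<in> space M. real (card {i \<in> {..<N}. Z i \<omega> \<le> ts}) \<ge> real m * (1 - \<epsilon>)} = space M"
      by (auto intro: order_trans)
    then show ?thesis by (simp add: prob_space)
  next
    case False
    then have m1: "1 \<le> m" and \<epsilon>1: "\<epsilon> < 1" by auto
    have \<rho>0: "0 < \<rho>" unfolding \<rho>_def using m1 Npos by simp
    define V where "V = (if \<rho> \<le> 1/2 then \<rho> * (1 - \<rho>) else 1/4)"
    have V0: "0 < V" unfolding V_def using \<rho>0 \<rho> by auto
    have V8: "8 * V * (1 - \<rho>)\<^sup>2 \<le> 1"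
    proof (cases "\<rho> \<le> 1/2")
      case True
      then show ?thesis using poly_ineq8[of \<rho>] unfolding V_def
        by (simp add: power2_eq_square power3_eq_cube algebra_simps)
    next
      case False
      then have "(1 - \<rho>)\<^sup>2 \<le> (1/2)\<^sup>2" using \<rho> by (intro power_mono) auto
      then have "(1 - \<rho>)\<^sup>2 \<le> 1/4" by (simp add: power_divide)
      moreover have "8 * V * (1 - \<rho>)\<^sup>2 = 2 * (1 - \<rho>)\<^sup>2" using False unfolding V_def by simp
      ultimately show ?thesis by linarith
    qed
    define l where "l = \<epsilon> * \<rho> / V"
    have l0: "0 < l" unfolding l_def using \<epsilon> \<rho>0 V0 by simp
    have pr: "prob {\<omega> \<in> space M. Z j \<omega> \<le> ts} = \<rho>" if "j < N" for j
      using law[OF that ts0] ets by simp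
    have "prob {\<omega> \<in> space M. real m * (1 - \<epsilon>) \<le> cnt ts \<omega>} \<ge> 1 - prob {\<omega> \<in> space M. cnt ts \<omega> \<le> real m * (1 - \<epsilon>)}"
      by (rule prob_ge_compl[OF cntm])
    moreover have "prob {\<omega> \<in> space M. cnt ts \<omega> \<le> real m * (1 - \<epsilon>)} \<le> exp (l * (real m * (1 - \<epsilon>)) + real N * (- \<rho> * l + V * l\<^sup>2 / 2))"
      unfolding cnt_def
    proof (rule count_tail[OF indZ pr])
      show "r * (1 - r) \<le> V" if "0 \<le> r" "r \<le> \<rho>" for r
      proof (cases "\<rho> \<le> 1/2")
        case True
        have "\<rho> * (1 - \<rho>) - r * (1 - r) = (\<rho> - r) * (1 - \<rho> - r)" by (simp add: algebra_simps)
        also have "\<dots> \<ge> 0" using that True by (intro mult_nonneg_nonneg) auto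
        finally show ?thesis using True unfolding V_def by simp
      next
        case False
        then show ?thesis unfolding V_def
          using zero_le_power2[of "r - 1/2"] by (simp add: power2_eq_square algebra_simps)
      qed
    qed (use \<rho> l0 in auto)
    moreover have "l * (real m * (1 - \<epsilon>)) + real N * (- \<rho> * l + V * l\<^sup>2 / 2) = - real N * \<epsilon>\<^sup>2 * \<rho>\<^sup>2 / (2 * V)"
      unfolding mN l_def using V0 by (simp add: power2_eq_square field_simps)
    moreover have "- real N * \<epsilon>\<^sup>2 * \<rho>\<^sup>2 / (2 * V) \<le> - 4 * \<epsilon>\<^sup>2 * \<bar>1 - \<rho>\<bar>\<^sup>2 * (real m)\<^sup>2 / real N"
    proof -
      have A: "0 \<le> real N * \<epsilon>\<^sup>2 * \<rho>\<^sup>2 / (2 * V)" using V0 by simp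
      have "4 * \<epsilon>\<^sup>2 * \<bar>1 - \<rho>\<bar>\<^sup>2 * (real m)\<^sup>2 / real N = (real N * \<epsilon>\<^sup>2 * \<rho>\<^sup>2 / (2 * V)) * (8 * V * (1 - \<rho>)\<^sup>2)"
        unfolding mN using V0 Npos by (simp add: power2_eq_square field_simps)
      also have "\<dots> \<le> (real N * \<epsilon>\<^sup>2 * \<rho>\<^sup>2 / (2 * V)) * 1"
        by (rule mult_left_mono[OF V8 A])
      finally show ?thesis by simp
    qed
    moreover have "{\<omega> \<in> space M. real m * (1 - \<epsilon>) \<le> cnt ts \<omega>} = {\<omega> \<in> space M. real (card {i \<in> {..<N}. Z i \<omega> \<le> ts}) \<ge> real m * (1 - \<epsilon>)}"
      by (simp add: cnt_def)
    ultimately show ?thesis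
      by (smt (verit) exp_le_cancel_iff exp_gt_zero)
  qed
  show ?thesis using part1 part2 unfolding ts_def \<rho>_def by blast
qed

theorem proposition4:
  fixes M :: "'a measure" and n N m :: nat
    and A :: "nat \<Rightarrow> nat \<Rightarrow> 'a \<Rightarrow> complex"
    and x0 :: "nat \<Rightarrow> complex"
    and I :: "'a \<Rightarrow> nat set"
  assumes "prob_space M"
    and indep: "prob_space.indep_vars M (\<lambda>_. borel)
          (\<lambda>(k, j, r) \<omega>. if r then Re (A k j \<omega>) else Im (A k j \<omega>))
          ({..<n} \<times> {..<N} \<times> (UNIV :: bool set))"
    and re_gauss: "\<And>k j. k < n \<Longrightarrow> j < N \<Longrightarrow> distributed M lborel (\<lambda>\<omega>. Re (A k j \<omega>)) std_normal_density"
    and im_gauss: "\<And>k j. k < n \<Longrightarrow> j < N \<Longrightarrow> distributed M lborel (\<lambda>\<omega>. Im (A k j \<omega>)) std_normal_density"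
    and x0_norm: "(\<Sum>k<n. (cmod (x0 k))\<^sup>2) = 1"
    and I_sub: "\<And>\<omega>. \<omega> \<in> space M \<Longrightarrow> I \<omega> \<subseteq> {..<N}"
    and I_card: "\<And>\<omega>. \<omega> \<in> space M \<Longrightarrow> card (I \<omega>) = m"
    and I_small: "\<And>\<omega> i j. \<omega> \<in> space M \<Longrightarrow> i \<in> I \<omega> \<Longrightarrow> j \<in> {..<N} - I \<omega> \<Longrightarrow>
                    bval n A x0 i \<omega> \<le> bval n A x0 j \<omega>"
    and m_lt: "m < N"
  shows "(\<forall>\<delta>>0. 1 \<le> m \<longrightarrow>
            measure M {\<omega> \<in> space M. tau n N A x0 m \<omega> \<le> tau_star m N + \<delta>}
              \<ge> 1 - exp (- (real N / 2) * \<delta>\<^sup>2 * exp (- \<delta>) * \<bar>1 - real m / real N\<bar>\<^sup>2))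
       \<and> (\<forall>\<epsilon>>0.
            measure M {\<omega> \<in> space M. real (card (Ihat n N m A x0 \<omega>)) \<ge> real m * (1 - \<epsilon>)}
              \<ge> 1 - 2 * exp (- 4 * \<epsilon>\<^sup>2 * \<bar>1 - real m / real N\<bar>\<^sup>2 * (real m)\<^sup>2 / real N))"
proof -
  interpret prob_space M by fact
  define F where "F = (\<lambda>(k, j, r) \<omega>. if r then Re (A k j \<omega>) else Im (A k j \<omega>))"
  have indF: "indep_vars (\<lambda>_. borel) F ({..<n} \<times> {..<N} \<times> (UNIV :: bool set))"
    using indep unfolding F_def .
  define Z where "Z = (\<lambda>j \<omega>. (bval n A x0 j \<omega>)\<^sup>2)"
  have law: "prob {\<omega> \<in> space M. Z j \<omega> \<le> t} = 1 - exp (- t / 2)" if j: "j < N" and t: "0 \<le> t" for j t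
  proof -
    have "indep_vars (\<lambda>_. borel) (\<lambda>i. F ((\<lambda>(k, r). (k, j, r)) i)) ({..<n} \<times> UNIV)"
      by (rule indep_vars_reindex[OF indF]) (use j in \<open>auto simp: inj_on_def\<close>)
    then have "indep_vars (\<lambda>_. borel) (\<lambda>(k, r) \<omega>. if r then Re (A k j \<omega>) else Im (A k j \<omega>)) ({..<n} \<times> UNIV)"
      by (rule indep_vars_cong[THEN iffD1, rotated -1]) (auto simp: F_def)
    from column_law[OF this re_gauss[OF _ j] im_gauss[OF _ j] x0_norm t]
    show ?thesis by (simp add: Z_def bval_def)
  qed
  have indZ: "indep_vars (\<lambda>_. borel) Z {..<N}"
  proof -
    have "indep_vars (\<lambda>j. PiM ({..<n} \<times> {j} \<times> UNIV) (\<lambda>_. borel)) (\<lambda>j \<omega>. restrict (\<lambda>i. F i \<omega>) ({..<n} \<times> {j} \<times> UNIV)) {..<N}"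
      by (rule indep_vars_restrict[OF indF]) (auto simp: disjoint_family_on_def)
    then have "indep_vars (\<lambda>_. borel)
        (\<lambda>j \<omega>. (\<lambda>f. (\<Sum>k<n. f (k, j, True) * Re (x0 k) + f (k, j, False) * Im (x0 k))\<^sup>2
                  + (\<Sum>k<n. f (k, j, True) * Im (x0 k) - f (k, j, False) * Re (x0 k))\<^sup>2)
                (restrict (\<lambda>i. F i \<omega>) ({..<n} \<times> {j} \<times> UNIV))) {..<N}"
    proof (rule indep_vars_compose2)
      fix j assume "j \<in> {..<N}"
      have m1: "(\<lambda>f. f (k, j, b)) \<in> borel_measurable (PiM ({..<n} \<times> {j} \<times> UNIV) (\<lambda>_. borel))" if "k < n" for k b
        by (rule measurable_component_singleton) (use that in auto)
      show "(\<lambda>f. (\<Sum>k<n. f (k, j, True) * Re (x0 k) + f (k, j, False) * Im (x0 k))\<^sup>2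
                  + (\<Sum>k<n. f (k, j, True) * Im (x0 k) - f (k, j, False) * Re (x0 k))\<^sup>2)
          \<in> borel_measurable (PiM ({..<n} \<times> {j} \<times> UNIV) (\<lambda>_. borel))"
        by (intro borel_measurable_add borel_measurable_power borel_measurable_sum
              borel_measurable_diff borel_measurable_times measurable_const m1) auto
    qed
    then show ?thesis
    proof (rule indep_vars_cong[THEN iffD1, rotated -1])
      fix j assume j: "j \<in> {..<N}"
      show "(\<lambda>\<omega>. (\<lambda>f. (\<Sum>k<n. f (k, j, True) * Re (x0 k) + f (k, j, False) * Im (x0 k))\<^sup>2
                  + (\<Sum>k<n. f (k, j, True) * Im (x0 k) - f (k, j, False) * Re (x0 k))\<^sup>2)
                (restrict (\<lambda>i. F i \<omega>) ({..<n} \<times> {j} \<times> UNIV))) = Z j"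
      proof
        fix \<omega>
        have "(cmod (\<Sum>k<n. cnj (A k j \<omega>) * x0 k))\<^sup>2
            = (Re (\<Sum>k<n. cnj (A k j \<omega>) * x0 k))\<^sup>2 + (Im (\<Sum>k<n. cnj (A k j \<omega>) * x0 k))\<^sup>2"
          by (simp add: cmod_power2)
        also have "\<dots> = (\<Sum>k<n. Re (A k j \<omega>) * Re (x0 k) + Im (A k j \<omega>) * Im (x0 k))\<^sup>2
                  + (\<Sum>k<n. Re (A k j \<omega>) * Im (x0 k) - Im (A k j \<omega>) * Re (x0 k))\<^sup>2"
          by (simp add: Re_sum Im_sum)
        finally show "(\<lambda>f. (\<Sum>k<n. f (k, j, True) * Re (x0 k) + f (k, j, False) * Im (x0 k))\<^sup>2
                  + (\<Sum>k<n. f (k, j, True) * Im (x0 k) - f (k, j, False) * Re (x0 k))\<^sup>2)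
                (restrict (\<lambda>i. F i \<omega>) ({..<n} \<times> {j} \<times> UNIV)) = Z j \<omega>"
          using j by (simp add: Z_def bval_def F_def)
      qed
    qed auto
  qed
  have tau_eq: "tau n N A x0 m \<omega> = ord_stat (map (\<lambda>j. Z j \<omega>) [0..<N]) m" for \<omega>
    by (simp add: tau_def Z_def)
  have Ihat_eq: "Ihat n N m A x0 \<omega> = {i \<in> {..<N}. Z i \<omega> \<le> tau_star m N}" for \<omega>
    by (simp add: Ihat_def Z_def)
  show ?thesis
    using final_bounds[OF indZ law m_lt] unfolding tau_eq Ihat_eq by simp
qed

end
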